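(* Let $\mathcal{P}$ be a polyomino, $\mathbb{K}$ a field, $S=\mathbb{K}[x_v\mid v\in V(\mathcal{P})]$, $I_{\mathcal{P}}$ the polyomino ideal and $\mathbb{K}[\mathcal{P}]=S/I_{\mathcal{P}}$. Suppose $\mathcal{W}:I_1,\dots,I_\ell$ is a zig-zag walk of $\mathcal{P}$ with corners $v_i,z_i,u_i,v_{i+1}$ of $I_i$ as in the definition of zig-zag walk. Then $x_{v_1},\dots,x_{v_\ell}$ and $$f_{\mathcal{W}}=\prod_{k=1}^{\ell}x_{z_k}-\prod_{j=1}^{\ell}x_{u_j}$$ are zerodivisors of $\mathbb{K}[\mathcal{P}]$, with $x_{v_i}f_{\mathcal{W}}\in I_{\mathcal{P}}$ for $i=1,\dots,\ell$.
   Context: For $a\in\mathbb{N}^2$ the cell $[a,a+(1,1)]$ has vertices $a,a+(1,0),a+(0,1),a+(1,1)$ and four edges. A polyomino $\mathcal{P}$ is a finite nonempty set of cells such that any two cells are joined by a sequence of cells of $\mathcal{P}$, consecutive ones sharing an edge. $V(\mathcal{P})$ is the union of the vertex sets of its cells. For $a=(i,j)$, $b=(k,\ell)$ with $i<k$, $j<\ell$, the interval $[a,b]=\{(p,q): i\le p\le k,\ j\le q\le\ell\}$ has diagonal corners $a,b$ and anti-diagonal corners $(i,\ell),(k,j)$; it is an inner interval of $\mathcal{P}$ if all its cells belong to $\mathcal{P}$. $I_{\mathcal{P}}$ is generated by the binomials $x_ax_b-x_cx_d$ for inner intervals $[a,b]$ with anti-diagonal corners $c,d$. A horizontal (resp.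 vertical) edge interval of $\mathcal{P}$ is a set of lattice points $\{(t,j):i\le t\le k\}$ (resp. $\{(i,t): j\le t\le k\}$) such that each pair of consecutive points forms an edge of some cell of $\mathcal{P}$. A zig-zag walk of $\mathcal{P}$ is a sequence of distinct inner intervals $I_1,\dots,I_\ell$ of $\mathcal{P}$ such that, for each $i$, $v_i,z_i$ are the diagonal (resp. anti-diagonal) corners and $u_i,v_{i+1}$ the anti-diagonal (resp. diagonal) corners of $I_i$, and: (Z1) $I_1\cap I_\ell=\{v_1\}=\{v_{\ell+1}\}$ and $I_i\cap I_{i+1}=\{v_{i+1}\}$ for $i=1,\dots,\ell-1$; (Z2) $v_i$ and $v_{i+1}$ lie on a common (horizontal or vertical) edge interval of $\mathcal{P}$ for $i=1,\dots,\ell$; (Z3) for $i\ne j$ in $\{1,\dots,\ell\}$ there is no inner interval of $\mathcal{P}$ containing both $z_i$ and $z_j$. *)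

theory Defs
  imports Main "HOL-Library.Poly_Mapping"
begin

type_synonym point = "nat \<times> nat"
(* a cell [a, a+(1,1)] is represented by its lower-left corner a *)
type_synonym cell = "nat \<times> nat"
(* polynomials over 'k in variables x_v, v a lattice point *)
type_synonym 'k lpoly = "(point \<Rightarrow>\<^sub>0 nat) \<Rightarrow>\<^sub>0 'k"

definition cell_vertices :: "cell \<Rightarrow> point set" where
  "cell_vertices a = {a, (fst a + 1, snd a), (fst a, snd a + 1), (fst a + 1, snd a + 1)}"

definition cells_adjacent :: "cell \<Rightarrow> cell \<Rightarrow> bool" where
  "cells_adjacent a b \<longleftrightarrow>
     (fst a = fst b \<and> (snd b = snd a + 1 \<or> snd a = snd b + 1)) \<or>
     (snd a = snd b \<and> (fst b = fst a + 1 \<or> fst a = fst b + 1))"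

definition polyomino :: "cell set \<Rightarrow> bool" where
  "polyomino P \<longleftrightarrow> finite P \<and> P \<noteq> {} \<and>
     (\<forall>a\<in>P. \<forall>b\<in>P. (\<lambda>c d. c \<in> P \<and> d \<in> P \<and> cells_adjacent c d)\<^sup>*\<^sup>* a b)"

definition vertex_set :: "cell set \<Rightarrow> point set" where
  "vertex_set P = (\<Union>a\<in>P. cell_vertices a)"

definition interval_pts :: "point \<Rightarrow> point \<Rightarrow> point set" where
  "interval_pts a b = {(p, q). fst a \<le> p \<and> p \<le> fst b \<and> snd a \<le> q \<and> q \<le> snd b}"

definition inner_interval :: "cell set \<Rightarrow> point \<Rightarrow> point \<Rightarrow> bool" where
  "inner_interval P a b \<longleftrightarrow> fst a < fst b \<and> snd a < snd b \<and>
     (\<forall>p q. fst a \<le> p \<and> p < fst b \<and> snd a \<le> q \<and> q < snd b \<longrightarrow> (p, q) \<in> P)"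

definition diag_corners :: "point \<Rightarrow> point \<Rightarrow> point set" where
  "diag_corners a b = {a, b}"

definition antidiag_corners :: "point \<Rightarrow> point \<Rightarrow> point set" where
  "antidiag_corners a b = {(fst a, snd b), (fst b, snd a)}"

definition var :: "point \<Rightarrow> 'k::comm_ring_1 lpoly" where
  "var v = Poly_Mapping.single (Poly_Mapping.single v 1) 1"

(* the polynomial ring S = K[x_v | v \<in> V(P)] as a subset of all polynomials *)
definition S_ring :: "cell set \<Rightarrow> 'k::comm_ring_1 lpoly set" where
  "S_ring P = {p :: 'k lpoly. \<forall>m \<in> Poly_Mapping.keys p. Poly_Mapping.keys m \<subseteq> vertex_set P}"

definition inner_binomials :: "cell set \<Rightarrow> 'k::comm_ring_1 lpoly set" where
  "inner_binomials P = {var a * var b - var (fst a, snd b) * var (fst b, snd a) | a b.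
                          inner_interval P a b}"

definition polyomino_ideal :: "cell set \<Rightarrow> 'k::comm_ring_1 lpoly set" where
  "polyomino_ideal P = {p. \<exists>G c. finite G \<and> G \<subseteq> inner_binomials P \<and>
                              (\<forall>g\<in>G. c g \<in> S_ring P) \<and> p = (\<Sum>g\<in>G. c g * g)}"

(* f is a zerodivisor of S/I: some element of S not in I is killed by f modulo I *)
definition zerodivisor_mod :: "'k::comm_ring_1 lpoly set \<Rightarrow> 'k lpoly set \<Rightarrow> 'k lpoly \<Rightarrow> bool" where
  "zerodivisor_mod R I f \<longleftrightarrow> (\<exists>g\<in>R. g \<notin> I \<and> f * g \<in> I)"

definition h_edge :: "cell set \<Rightarrow> point \<Rightarrow> bool" where  (* segment (t,j)-(t+1,j) *)
  "h_edge P p \<longleftrightarrow> p \<in> P \<or> (snd p > 0 \<and> (fst p, snd p - 1) \<in> P)"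

definition v_edge :: "cell set \<Rightarrow> point \<Rightarrow> bool" where  (* segment (i,t)-(i,t+1) *)
  "v_edge P p \<longleftrightarrow> p \<in> P \<or> (fst p > 0 \<and> (fst p - 1, snd p) \<in> P)"

definition h_edge_interval :: "cell set \<Rightarrow> point set \<Rightarrow> bool" where
  "h_edge_interval P E \<longleftrightarrow> (\<exists>i k j. i \<le> k \<and> E = {(t, j) | t. i \<le> t \<and> t \<le> k} \<and>
       (\<forall>t. i \<le> t \<and> t < k \<longrightarrow> h_edge P (t, j)))"

definition v_edge_interval :: "cell set \<Rightarrow> point set \<Rightarrow> bool" where
  "v_edge_interval P E \<longleftrightarrow> (\<exists>i j k. j \<le> k \<and> E = {(i, t) | t. j \<le> t \<and> t \<le> k} \<and>
       (\<forall>t. j \<le> t \<and> t < k \<longrightarrow> v_edge P (i, t)))"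

definition on_common_edge_interval :: "cell set \<Rightarrow> point \<Rightarrow> point \<Rightarrow> bool" where
  "on_common_edge_interval P p q \<longleftrightarrow>
     (\<exists>E. (h_edge_interval P E \<or> v_edge_interval P E) \<and> p \<in> E \<and> q \<in> E)"

(* Zig-zag walk I_1..I_l; interval I_i is given by its diagonal corners Ia i, Ib i;
   v, z, u are the corner labellings, indices 1..l, with v (l+1) = v 1. *)
definition zigzag_walk :: "cell set \<Rightarrow> nat \<Rightarrow> (nat \<Rightarrow> point) \<Rightarrow> (nat \<Rightarrow> point) \<Rightarrow>
     (nat \<Rightarrow> point) \<Rightarrow> (nat \<Rightarrow> point) \<Rightarrow> (nat \<Rightarrow> point) \<Rightarrow> bool" where
  "zigzag_walk P l Ia Ib v z u \<longleftrightarrow>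
     1 \<le> l \<and>
     (\<forall>i\<in>{1..l}. inner_interval P (Ia i) (Ib i)) \<and>
     (\<forall>i\<in>{1..l}. \<forall>j\<in>{1..l}. i \<noteq> j \<longrightarrow> (Ia i, Ib i) \<noteq> (Ia j, Ib j)) \<and>
     (\<forall>i\<in>{1..l}.
        ({v i, z i} = diag_corners (Ia i) (Ib i) \<and> {u i, v (i+1)} = antidiag_corners (Ia i) (Ib i)) \<or>
        ({v i, z i} = antidiag_corners (Ia i) (Ib i) \<and> {u i, v (i+1)} = diag_corners (Ia i) (Ib i))) \<and>
     \<comment> \<open>(Z1)\<close>
     interval_pts (Ia 1) (Ib 1) \<inter> interval_pts (Ia l) (Ib l) = {v 1} \<and> {v 1} = {v (l+1)} \<and>
     (\<forall>i. 1 \<le> i \<and> i \<le> l - 1 \<longrightarrow>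
        interval_pts (Ia i) (Ib i) \<inter> interval_pts (Ia (i+1)) (Ib (i+1)) = {v (i+1)}) \<and>
     \<comment> \<open>(Z2)\<close>
     (\<forall>i\<in>{1..l}. on_common_edge_interval P (v i) (v (i+1))) \<and>
     \<comment> \<open>(Z3)\<close>
     (\<forall>i\<in>{1..l}. \<forall>j\<in>{1..l}. i \<noteq> j \<longrightarrow>
        \<not> (\<exists>a b. inner_interval P a b \<and> z i \<in> interval_pts a b \<and> z j \<in> interval_pts a b))"

definition f_walk :: "nat \<Rightarrow> (nat \<Rightarrow> point) \<Rightarrow> (nat \<Rightarrow> point) \<Rightarrow> 'k::comm_ring_1 lpoly" where
  "f_walk l z u = (\<Prod>k=1..l. var (z k)) - (\<Prod>j=1..l. var (u j))"

end

theory Submission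
  imports Defs
begin

lemma S_mult: "p \<in> S_ring P \<Longrightarrow> q \<in> S_ring P \<Longrightarrow> p * q \<in> S_ring P"
proof -
  assume p: "p \<in> S_ring P" and q: "q \<in> S_ring P"
  have "Poly_Mapping.keys m \<subseteq> vertex_set P" if m: "m \<in> Poly_Mapping.keys (p * q)" for m
  proof -
    obtain a b where "m = a + b" "a \<in> Poly_Mapping.keys p" "b \<in> Poly_Mapping.keys q"
      using keys_mult m by blast
    then show ?thesis using p q keys_add[of a b] unfolding S_ring_def by blast
  qed
  then show ?thesis unfolding S_ring_def by blast
qed

lemma S_add: "p \<in> S_ring P \<Longrightarrow> q \<in> S_ring P \<Longrightarrow> p + q \<in> S_ring P"
proof -
  assume p: "p \<in> S_ring P" and q: "q \<in> S_ring P"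
  have "Poly_Mapping.keys m \<subseteq> vertex_set P" if m: "m \<in> Poly_Mapping.keys (p + q)" for m
  proof -
    have "m \<in> Poly_Mapping.keys p \<union> Poly_Mapping.keys q" by (rule subsetD[OF keys_add m])
    then show ?thesis using p q unfolding S_ring_def by auto
  qed
  then show ?thesis unfolding S_ring_def by auto
qed

lemma S_neg: "p \<in> S_ring P \<Longrightarrow> - p \<in> S_ring P"
  unfolding S_ring_def by simp

lemma S_diff: "p \<in> S_ring P \<Longrightarrow> q \<in> S_ring P \<Longrightarrow> p - q \<in> S_ring P"
proof -
  assume "p \<in> S_ring P" "q \<in> S_ring P"
  then have "p + - q \<in> S_ring P" by (intro S_add S_neg)
  then show ?thesis by simp
qed

lemma S_one: "1 \<in> S_ring P"
  unfolding S_ring_def by simp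

lemma S_zero: "0 \<in> S_ring P"
  unfolding S_ring_def by simp

lemma S_var: "v \<in> vertex_set P \<Longrightarrow> (var v :: 'k::field lpoly) \<in> S_ring P"
  unfolding S_ring_def var_def by simp

lemma S_prod: "(\<And>k. k \<in> K \<Longrightarrow> f k \<in> S_ring P) \<Longrightarrow> prod f K \<in> S_ring P"
  by (induction K rule: infinite_finite_induct) (auto simp: S_one S_mult)

lemma I_add:
  assumes "p \<in> polyomino_ideal P" "q \<in> polyomino_ideal P"
  shows "p + q \<in> polyomino_ideal P"
proof -
  obtain G1 c1 where 1: "finite G1" "G1 \<subseteq> inner_binomials P" "\<forall>g\<in>G1. c1 g \<in> S_ring P"
    "p = (\<Sum>g\<in>G1. c1 g * g)" using assms(1) unfolding polyomino_ideal_def by blast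
  obtain G2 c2 where 2: "finite G2" "G2 \<subseteq> inner_binomials P" "\<forall>g\<in>G2. c2 g \<in> S_ring P"
    "q = (\<Sum>g\<in>G2. c2 g * g)" using assms(2) unfolding polyomino_ideal_def by blast
  define c where "c g = (if g \<in> G1 then c1 g else 0) + (if g \<in> G2 then c2 g else 0)" for g
  have "(\<Sum>g\<in>G1 \<union> G2. c g * g) = (\<Sum>g\<in>G1 \<union> G2. (if g \<in> G1 then c1 g else 0) * g)
      + (\<Sum>g\<in>G1 \<union> G2. (if g \<in> G2 then c2 g else 0) * g)"
    unfolding c_def by (simp add: distrib_right sum.distrib)
  also have "(\<Sum>g\<in>G1 \<union> G2. (if g \<in> G1 then c1 g else 0) * g) = p"
    unfolding 1(4) by (rule sum.mono_neutral_cong_right) (use 1 2 in auto)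
  also have "(\<Sum>g\<in>G1 \<union> G2. (if g \<in> G2 then c2 g else 0) * g) = q"
    unfolding 2(4) by (rule sum.mono_neutral_cong_right) (use 1 2 in auto)
  finally have "p + q = (\<Sum>g\<in>G1 \<union> G2. c g * g)" by simp
  moreover have "\<forall>g\<in>G1 \<union> G2. c g \<in> S_ring P"
  proof
    fix g assume "g \<in> G1 \<union> G2"
    show "c g \<in> S_ring P" unfolding c_def
    proof (rule S_add)
      show "(if g \<in> G1 then c1 g else 0) \<in> S_ring P"
        using 1(3) by (cases "g \<in> G1") (simp_all add: S_ring_def)
      show "(if g \<in> G2 then c2 g else 0) \<in> S_ring P"
        using 2(3) by (cases "g \<in> G2") (simp_all add: S_ring_def)
    qed
  qed
  ultimately show ?thesis unfolding polyomino_ideal_def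
    by (intro CollectI exI[of _ "G1 \<union> G2"] exI[of _ c]) (use 1 2 in auto)
qed

lemma I_smult:
  assumes "p \<in> polyomino_ideal P" "r \<in> S_ring P"
  shows "r * p \<in> polyomino_ideal P"
proof -
  obtain G1 c1 where 1: "finite G1" "G1 \<subseteq> inner_binomials P" "\<forall>g\<in>G1. c1 g \<in> S_ring P"
    "p = (\<Sum>g\<in>G1. c1 g * g)" using assms(1) unfolding polyomino_ideal_def by blast
  have "r * p = (\<Sum>g\<in>G1. (r * c1 g) * g)" unfolding 1(4) by (simp add: sum_distrib_left mult.assoc)
  moreover have "\<forall>g\<in>G1. r * c1 g \<in> S_ring P" using 1 assms(2) by (auto intro: S_mult)
  ultimately show ?thesis unfolding polyomino_ideal_def
    by (intro CollectI exI[of _ G1] exI[of _ "\<lambda>g. r * c1 g"]) (use 1 in auto)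
qed

lemma I_neg:
  assumes "p \<in> polyomino_ideal P"
  shows "- p \<in> polyomino_ideal P"
  using I_smult[OF assms S_neg[OF S_one]] by simp

lemma I_diff:
  assumes "p \<in> polyomino_ideal P" "q \<in> polyomino_ideal P"
  shows "p - q \<in> polyomino_ideal P"
  using I_add[OF assms(1) I_neg[OF assms(2)]] by simp

lemma I_bin:
  assumes "inner_interval P a b"
  shows "var a * var b - var (fst a, snd b) * var (fst b, snd a) \<in> polyomino_ideal P"
proof -
  let ?g = "var a * var b - var (fst a, snd b) * var (fst b, snd a)"
  have "?g \<in> inner_binomials P" unfolding inner_binomials_def using assms by blast
  moreover have "?g = (\<Sum>g\<in>{?g}. 1 * g)" by simp
  ultimately show ?thesis unfolding polyomino_ideal_def
    by (intro CollectI exI[of _ "{?g}"] exI[of _ "\<lambda>_. 1"]) (use S_one in auto)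
qed


lemma I_zero: "0 \<in> polyomino_ideal P"
  unfolding polyomino_ideal_def by (rule CollectI, rule exI[of _ "{}"]) auto

lemma corner_vertex:
  assumes "inner_interval P a b" "p \<in> {a, b, (fst a, snd b), (fst b, snd a)}"
  shows "p \<in> vertex_set P"
proof -
  obtain a1 a2 b1 b2 where ab: "a = (a1, a2)" "b = (b1, b2)" by (cases a, cases b) auto
  have lt: "a1 < b1" "a2 < b2" using assms(1) ab unfolding inner_interval_def by auto
  have H: "\<forall>p q. a1 \<le> p \<and> p < b1 \<and> a2 \<le> q \<and> q < b2 \<longrightarrow> (p, q) \<in> P"
    using assms(1) ab unfolding inner_interval_def by auto
  have cells: "(a1, a2) \<in> P" "(b1 - 1, b2 - 1) \<in> P" "(a1, b2 - 1) \<in> P" "(b1 - 1, a2) \<in> P"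
    using lt by (intro H[rule_format] conjI; linarith)+
  have "(a1, a2) \<in> cell_vertices (a1, a2)" "(b1, b2) \<in> cell_vertices (b1 - 1, b2 - 1)"
       "(a1, b2) \<in> cell_vertices (a1, b2 - 1)" "(b1, a2) \<in> cell_vertices (b1 - 1, a2)"
    using lt unfolding cell_vertices_def by auto
  then show ?thesis using assms(2) cells ab unfolding vertex_set_def by auto
qed

lemma corners_in:
  assumes "inner_interval P a b"
  shows "a \<in> interval_pts a b" "b \<in> interval_pts a b" "(fst a, snd b) \<in> interval_pts a b"
    "(fst b, snd a) \<in> interval_pts a b"
  using assms by (auto simp: interval_pts_def inner_interval_def)

lemma pair_prod: "{x, y} = {a, b} \<Longrightarrow> (f x :: 'a::comm_monoid_mult) * f y = f a * f b"
  by (auto simp: doubleton_eq_iff mult.commute)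

lemma tele:
  fixes w z u :: "nat \<Rightarrow> point"
  assumes step: "\<And>k. a \<le> k \<Longrightarrow> k < b \<Longrightarrow>
      (var (w k) * var (z k) - var (u k) * var (w (Suc k)) :: 'k::field lpoly) \<in> polyomino_ideal P"
    and zS: "\<And>k. a \<le> k \<Longrightarrow> k < b \<Longrightarrow> (var (z k) :: 'k lpoly) \<in> S_ring P"
    and uS: "\<And>k. a \<le> k \<Longrightarrow> k < b \<Longrightarrow> (var (u k) :: 'k lpoly) \<in> S_ring P"
    and ab: "a \<le> b"
  shows "(var (w a) * (\<Prod>k\<in>{a..<b}. var (z k)) - (\<Prod>k\<in>{a..<b}. var (u k)) * var (w b) :: 'k lpoly)
      \<in> polyomino_ideal P"
  using ab step zS uS
proof (induction b)
  case 0
  then show ?case using I_zero by simp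
next
  case (Suc b)
  show ?case
  proof (cases "a = Suc b")
    case True
    then show ?thesis using I_zero by simp
  next
    case False
    then have ab': "a \<le> b" using Suc.prems by simp
    let ?Z = "(\<Prod>k\<in>{a..<b}. var (z k)) :: 'k lpoly"
    let ?U = "(\<Prod>k\<in>{a..<b}. var (u k)) :: 'k lpoly"
    have IH: "var (w a) * ?Z - ?U * var (w b) \<in> polyomino_ideal P"
      using Suc.IH[OF ab'] Suc.prems by simp
    have st: "(var (w b) * var (z b) - var (u b) * var (w (Suc b)) :: 'k lpoly) \<in> polyomino_ideal P"
      using Suc.prems(2)[of b] ab' by simp
    have US: "?U \<in> S_ring P" using Suc.prems by (intro S_prod) auto
    have zb: "(var (z b) :: 'k lpoly) \<in> S_ring P" using Suc.prems(3)[of b] ab' by simp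
    have "var (z b) * (var (w a) * ?Z - ?U * var (w b))
        + ?U * (var (w b) * var (z b) - var (u b) * var (w (Suc b))) \<in> polyomino_ideal P"
      by (intro I_add I_smult IH st US zb)
    moreover have "var (z b) * (var (w a) * ?Z - ?U * var (w b))
        + ?U * (var (w b) * var (z b) - var (u b) * var (w (Suc b)))
        = var (w a) * (\<Prod>k\<in>{a..<Suc b}. var (z k)) - (\<Prod>k\<in>{a..<Suc b}. var (u k)) * var (w (Suc b))"
      using ab' by (simp add: prod.atLeastLessThan_Suc algebra_simps)
    ultimately show ?thesis by simp
  qed
qed

lemma lookup_mult_single_zero:
  assumes "\<forall>m'. M \<noteq> m' + t"
  shows "Poly_Mapping.lookup (c * Poly_Mapping.single t x) M = 0"
proof (rule ccontr)
  assume "Poly_Mapping.lookup (c * Poly_Mapping.single t x) M \<noteq> 0"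
  then have "M \<in> Poly_Mapping.keys (c * Poly_Mapping.single t x)" by (simp add: in_keys_iff)
  then obtain a b where "M = a + b" "b \<in> Poly_Mapping.keys (Poly_Mapping.single t x)"
    using keys_mult by blast
  then have "M = a + t" by (auto split: if_splits)
  then show False using assms by blast
qed

lemma var_mult: "var a * var b = Poly_Mapping.single (Poly_Mapping.single a 1 + Poly_Mapping.single b 1) 1"
  unfolding var_def by (simp add: mult_single)

lemma coeff_zero:
  fixes M :: "point \<Rightarrow>\<^sub>0 nat"
  assumes H: "\<And>a b m'. inner_interval P a b \<Longrightarrow>
      M \<noteq> m' + (Poly_Mapping.single a 1 + Poly_Mapping.single b 1) \<and>
      M \<noteq> m' + (Poly_Mapping.single (fst a, snd b) 1 + Poly_Mapping.single (fst b, snd a) 1)"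
    and p: "p \<in> polyomino_ideal P"
  shows "Poly_Mapping.lookup p M = 0"
proof -
  obtain G c where G: "finite G" "G \<subseteq> inner_binomials P" "p = (\<Sum>g\<in>G. c g * g)"
    using p unfolding polyomino_ideal_def by blast
  have "Poly_Mapping.lookup (c g * g) M = 0" if "g \<in> G" for g
  proof -
    obtain a b where ab: "inner_interval P a b"
      "g = var a * var b - var (fst a, snd b) * var (fst b, snd a)"
      using G(2) \<open>g \<in> G\<close> unfolding inner_binomials_def by blast
    have n1: "\<forall>m'. M \<noteq> m' + (Poly_Mapping.single a 1 + Poly_Mapping.single b 1)"
      using H[OF ab(1)] by simp
    have n2: "\<forall>m'. M \<noteq> m' + (Poly_Mapping.single (fst a, snd b) 1 + Poly_Mapping.single (fst b, snd a) 1)"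
      using H[OF ab(1)] by simp
    show ?thesis unfolding ab(2) var_mult right_diff_distrib lookup_minus
      by (simp only: lookup_mult_single_zero[OF n1] lookup_mult_single_zero[OF n2]) simp
  qed
  then show ?thesis unfolding G(3) lookup_sum by simp
qed

lemma var_prod: "(\<Prod>k\<in>K. var (f k)) =
   (Poly_Mapping.single (\<Sum>k\<in>K. Poly_Mapping.single (f k) (1::nat)) 1 :: 'k::comm_ring_1 lpoly)"
proof (induction K rule: infinite_finite_induct)
  case (insert x F)
  then show ?case by (simp add: var_def mult_single add.commute)
qed (simp_all add: one_poly_mapping.abs_eq)


lemma lookup_sum_single_nz:
  "Poly_Mapping.lookup (\<Sum>k\<in>K. Poly_Mapping.single (f k) (1::nat)) p \<noteq> 0 \<Longrightarrow> \<exists>k\<in>K. f k = p"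
  unfolding lookup_sum by (metis (mono_tags, lifting) lookup_single_not_eq sum.neutral)

lemma lookup_sum_single_mem:
  assumes "finite K" "k \<in> K"
  shows "Poly_Mapping.lookup (\<Sum>k\<in>K. Poly_Mapping.single (f k) (1::nat)) (f k) \<noteq> 0"
proof -
  have "Poly_Mapping.lookup (Poly_Mapping.single (f k) (1::nat)) (f k)
     \<le> (\<Sum>x\<in>K. Poly_Mapping.lookup (Poly_Mapping.single (f x) (1::nat)) (f k))"
    by (rule member_le_sum) (use assms in auto)
  moreover have "Poly_Mapping.lookup (Poly_Mapping.single (f k) (1::nat)) (f k) = 1" by simp
  ultimately show ?thesis unfolding lookup_sum by linarith
qed

lemma decomp_nz:
  fixes M :: "point \<Rightarrow>\<^sub>0 nat"
  assumes "M = m' + (Poly_Mapping.single a 1 + Poly_Mapping.single b 1)"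
  shows "Poly_Mapping.lookup M a \<noteq> 0" "Poly_Mapping.lookup M b \<noteq> 0"
  using assms by (simp_all add: lookup_add lookup_single)

theorem proposition3p5:
  fixes P :: "cell set" and l :: nat and Ia Ib v z u :: "nat \<Rightarrow> point"
  assumes "polyomino P"
    and "zigzag_walk P l Ia Ib v z u"
  shows "(\<forall>i\<in>{1..l}. zerodivisor_mod (S_ring P) (polyomino_ideal P) (var (v i) :: 'k::field lpoly))
       \<and> zerodivisor_mod (S_ring P) (polyomino_ideal P) (f_walk l z u :: 'k::field lpoly)
       \<and> (\<forall>i\<in>{1..l}. (var (v i) * f_walk l z u :: 'k::field lpoly) \<in> polyomino_ideal P)"
proof -
  note Z = assms(2)[unfolded zigzag_walk_def]
  have l1: "1 \<le> l" using Z by (rule conjunct1)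
  have inn: "\<And>i. i \<in> {1..l} \<Longrightarrow> inner_interval P (Ia i) (Ib i)"
    using Z[THEN conjunct2, THEN conjunct1] by (rule bspec)
  have crn: "\<And>i. i \<in> {1..l} \<Longrightarrow>
        ({v i, z i} = diag_corners (Ia i) (Ib i) \<and> {u i, v (i+1)} = antidiag_corners (Ia i) (Ib i)) \<or>
        ({v i, z i} = antidiag_corners (Ia i) (Ib i) \<and> {u i, v (i+1)} = diag_corners (Ia i) (Ib i))"
    using Z[THEN conjunct2, THEN conjunct2, THEN conjunct2, THEN conjunct1] by (rule bspec)
  have vl: "{v 1} = {v (l+1)}"
    using Z[THEN conjunct2, THEN conjunct2, THEN conjunct2, THEN conjunct2, THEN conjunct2, THEN conjunct1] .
  have Z3a: "\<forall>i\<in>{1..l}. \<forall>j\<in>{1..l}. i \<noteq> j \<longrightarrow>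
        \<not> (\<exists>a b. inner_interval P a b \<and> z i \<in> interval_pts a b \<and> z j \<in> interval_pts a b)"
    using Z[THEN conjunct2, THEN conjunct2, THEN conjunct2, THEN conjunct2, THEN conjunct2, THEN conjunct2,
        THEN conjunct2, THEN conjunct2] .
  have Z3: "\<And>i j a b. i \<in> {1..l} \<Longrightarrow> j \<in> {1..l} \<Longrightarrow> i \<noteq> j \<Longrightarrow> inner_interval P a b \<Longrightarrow>
        z i \<in> interval_pts a b \<Longrightarrow> z j \<in> interval_pts a b \<Longrightarrow> False"
    using Z3a by blast
  have vl': "v (Suc l) = v 1" using vl by simp
  let ?I = "polyomino_ideal P :: 'k lpoly set"
  let ?S = "S_ring P :: 'k lpoly set"
  have corners: "v i \<in> C \<and> z i \<in> C \<and> u i \<in> C \<and> v (Suc i) \<in> C"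
    if "i \<in> {1..l}" "C = {Ia i, Ib i, (fst (Ia i), snd (Ib i)), (fst (Ib i), snd (Ia i))}" for i C
  proof -
    have U: "{v i, z i} \<union> {u i, v (i+1)} = diag_corners (Ia i) (Ib i) \<union> antidiag_corners (Ia i) (Ib i)"
      using crn[OF that(1)] by (metis Un_commute)
    have C: "diag_corners (Ia i) (Ib i) \<union> antidiag_corners (Ia i) (Ib i) = C"
      unfolding that(2) diag_corners_def antidiag_corners_def by auto
    have "{v i, z i} \<union> {u i, v (i+1)} \<subseteq> C" using U C by simp
    then show ?thesis by simp
  qed
  have vert: "v i \<in> vertex_set P \<and> z i \<in> vertex_set P \<and> u i \<in> vertex_set P \<and> v (Suc i) \<in> vertex_set P"
    if "i \<in> {1..l}" for i
    using corners[OF that refl] corner_vertex[OF inn[OF that]] by blast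
  have varS: "var (v i) \<in> ?S" "var (z i) \<in> ?S" "var (u i) \<in> ?S" if "i \<in> {1..l}" for i
    using vert[OF that] S_var by blast+
  have step: "(var (v k) * var (z k) - var (u k) * var (v (Suc k)) :: 'k lpoly) \<in> ?I"
    if "k \<in> {1..l}" for k
  proof -
    have bin: "var (Ia k) * var (Ib k) - var (fst (Ia k), snd (Ib k)) * var (fst (Ib k), snd (Ia k))
       \<in> ?I" by (rule I_bin[OF inn[OF that]])
    from crn[OF that] show ?thesis
    proof
      assume h: "{v k, z k} = diag_corners (Ia k) (Ib k) \<and> {u k, v (k+1)} = antidiag_corners (Ia k) (Ib k)"
      have "var (v k) * var (z k) = (var (Ia k) * var (Ib k) :: 'k lpoly)"
        using h unfolding diag_corners_def by (rule pair_prod[OF conjunct1])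
      moreover have "var (u k) * var (v (Suc k)) =
          (var (fst (Ia k), snd (Ib k)) * var (fst (Ib k), snd (Ia k)) :: 'k lpoly)"
        using h unfolding antidiag_corners_def by (intro pair_prod) simp
      ultimately show ?thesis using bin by simp
    next
      assume h: "{v k, z k} = antidiag_corners (Ia k) (Ib k) \<and> {u k, v (k+1)} = diag_corners (Ia k) (Ib k)"
      have "var (v k) * var (z k) =
          (var (fst (Ia k), snd (Ib k)) * var (fst (Ib k), snd (Ia k)) :: 'k lpoly)"
        using h unfolding antidiag_corners_def by (intro pair_prod) simp
      moreover have "var (u k) * var (v (Suc k)) = (var (Ia k) * var (Ib k) :: 'k lpoly)"
        using h unfolding diag_corners_def by (intro pair_prod) simp
      ultimately show ?thesis using I_neg[OF bin] by (simp add: algebra_simps)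
    qed
  qed
  have tel: "(var (v a) * (\<Prod>k\<in>{a..<b}. var (z k)) - (\<Prod>k\<in>{a..<b}. var (u k)) * var (v b) :: 'k lpoly)
      \<in> ?I" if "1 \<le> a" "a \<le> b" "b \<le> Suc l" for a b
    by (rule tele) (use that step varS in auto)
  let ?f = "f_walk l z u :: 'k lpoly"
  have fS: "?f \<in> ?S" unfolding f_walk_def using varS by (intro S_diff S_prod) auto
  have mem: "var (v i) * ?f \<in> ?I" if i: "i \<in> {1..l}" for i
  proof -
    let ?Z1 = "(\<Prod>k\<in>{1..<i}. var (z k)) :: 'k lpoly"
    let ?Z2 = "(\<Prod>k\<in>{i..<Suc l}. var (z k)) :: 'k lpoly"
    let ?U1 = "(\<Prod>k\<in>{1..<i}. var (u k)) :: 'k lpoly"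
    let ?U2 = "(\<Prod>k\<in>{i..<Suc l}. var (u k)) :: 'k lpoly"
    have A: "var (v i) * ?Z2 - ?U2 * var (v 1) \<in> ?I"
      using tel[of i "Suc l"] i vl' by simp
    have B: "var (v 1) * ?Z1 - ?U1 * var (v i) \<in> ?I"
      using tel[of 1 i] i by simp
    have Z1S: "?Z1 \<in> ?S" using varS i by (intro S_prod) auto
    have U2S: "?U2 \<in> ?S" using varS i by (intro S_prod) auto
    have X: "?Z1 * (var (v i) * ?Z2 - ?U2 * var (v 1)) + ?U2 * (var (v 1) * ?Z1 - ?U1 * var (v i)) \<in> ?I"
      by (intro I_add I_smult A B Z1S U2S)
    have ivl: "{1..l} = {1..<Suc l}" by auto
    have ZZ: "(\<Prod>k=1..l. var (z k)) = ?Z1 * (?Z2 :: 'k lpoly)"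
      unfolding ivl using i by (intro prod.atLeastLessThan_concat[symmetric]) auto
    have UU: "(\<Prod>k=1..l. var (u k)) = ?U1 * (?U2 :: 'k lpoly)"
      unfolding ivl using i by (intro prod.atLeastLessThan_concat[symmetric]) auto
    have eq: "var (v i) * (?Z1 * ?Z2 - ?U1 * ?U2) =
        ?Z1 * (var (v i) * ?Z2 - ?U2 * var (v 1)) + ?U2 * (var (v 1) * ?Z1 - ?U1 * var (v i))"
      by (simp add: algebra_simps)
    show ?thesis unfolding f_walk_def ZZ UU eq by (rule X)
  qed
  have ab_ne: "a \<noteq> b" "(fst a, snd b) \<noteq> (fst b, snd a)" if "inner_interval P a b" for a b
    using that unfolding inner_interval_def by auto
  have vnot: "(var w :: 'k lpoly) \<notin> ?I" for w
  proof
    assume "var w \<in> ?I"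
    moreover have "Poly_Mapping.lookup (var w :: 'k lpoly) (Poly_Mapping.single w (1::nat)) \<noteq> 0"
      unfolding var_def by simp
    moreover have "Poly_Mapping.lookup p (Poly_Mapping.single w (1::nat)) = 0" if "p \<in> ?I" for p
    proof (rule coeff_zero[OF _ that])
      fix a b m' assume ab: "inner_interval P a b"
      show "Poly_Mapping.single w (1::nat) \<noteq> m' + (Poly_Mapping.single a 1 + Poly_Mapping.single b 1) \<and>
        Poly_Mapping.single w (1::nat) \<noteq> m' + (Poly_Mapping.single (fst a, snd b) 1 + Poly_Mapping.single (fst b, snd a) 1)"
      proof (intro conjI notI)
        assume "Poly_Mapping.single w (1::nat) = m' + (Poly_Mapping.single a 1 + Poly_Mapping.single b 1)"
        from decomp_nz[OF this] show False using ab_ne[OF ab] by (auto simp: lookup_single when_def split: if_splits)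
      next
        assume "Poly_Mapping.single w (1::nat) = m' + (Poly_Mapping.single (fst a, snd b) 1 + Poly_Mapping.single (fst b, snd a) 1)"
        from decomp_nz[OF this] show False using ab_ne[OF ab] by (auto simp: lookup_single when_def split: if_splits)
      qed
    qed
    ultimately show False by blast
  qed
  define M where "M = (\<Sum>k\<in>{1..l}. Poly_Mapping.single (z k) (1::nat))"
  define U where "U = (\<Sum>k\<in>{1..l}. Poly_Mapping.single (u k) (1::nat))"
  have fform: "?f = Poly_Mapping.single M 1 - Poly_Mapping.single U 1"
    unfolding f_walk_def M_def U_def by (simp only: var_prod)
  have noz: "Poly_Mapping.lookup M p \<noteq> 0 \<Longrightarrow> Poly_Mapping.lookup M q \<noteq> 0 \<Longrightarrow> p \<noteq> q \<Longrightarrow>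
      inner_interval P a b \<Longrightarrow> p \<in> interval_pts a b \<Longrightarrow> q \<in> interval_pts a b \<Longrightarrow> False" for p q a b
  proof -
    assume h: "Poly_Mapping.lookup M p \<noteq> 0" "Poly_Mapping.lookup M q \<noteq> 0" "p \<noteq> q"
      "inner_interval P a b" "p \<in> interval_pts a b" "q \<in> interval_pts a b"
    obtain i where i: "i \<in> {1..l}" "z i = p" using lookup_sum_single_nz[where f=z and K="{1..l}" and p=p] h(1) unfolding M_def by blast
    obtain j where j: "j \<in> {1..l}" "z j = q" using lookup_sum_single_nz[where f=z and K="{1..l}" and p=q] h(2) unfolding M_def by blast
    have "i \<noteq> j" using h(3) i(2) j(2) by auto
    show False by (rule Z3[OF i(1) j(1) \<open>i \<noteq> j\<close> h(4)]) (use i j h in auto)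
  qed
  have UM: "U \<noteq> M"
  proof
    assume "U = M"
    have "Poly_Mapping.lookup M (u 1) \<noteq> 0"
      unfolding \<open>U = M\<close>[symmetric] U_def using l1 lookup_sum_single_mem[where K="{1..l}" and k=1 and f=u] by simp
    then obtain k where k: "k \<in> {1..l}" "z k = u 1" using lookup_sum_single_nz[where f=z and K="{1..l}" and p="u 1"] unfolding M_def by blast
    have one: "1 \<in> {1..l}" using l1 by simp
    have dj: "diag_corners (Ia 1) (Ib 1) \<inter> antidiag_corners (Ia 1) (Ib 1) = {}"
      using inn[OF one] unfolding diag_corners_def antidiag_corners_def inner_interval_def
      by (cases "Ia 1"; cases "Ib 1") (auto simp: insert_commute)
    have "(z 1 \<in> diag_corners (Ia 1) (Ib 1) \<and> u 1 \<in> antidiag_corners (Ia 1) (Ib 1)) \<or>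
          (z 1 \<in> antidiag_corners (Ia 1) (Ib 1) \<and> u 1 \<in> diag_corners (Ia 1) (Ib 1))"
    proof -
      have m: "z 1 \<in> {v 1, z 1}" "u 1 \<in> {u 1, v (1+1)}" by simp_all
      from crn[OF one] show ?thesis
      proof
        assume E: "{v 1, z 1} = diag_corners (Ia 1) (Ib 1) \<and> {u 1, v (1+1)} = antidiag_corners (Ia 1) (Ib 1)"
        show ?thesis using m(1)[unfolded conjunct1[OF E]] m(2)[unfolded conjunct2[OF E]] by blast
      next
        assume E: "{v 1, z 1} = antidiag_corners (Ia 1) (Ib 1) \<and> {u 1, v (1+1)} = diag_corners (Ia 1) (Ib 1)"
        show ?thesis using m(1)[unfolded conjunct1[OF E]] m(2)[unfolded conjunct2[OF E]] by blast
      qed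
    qed
    then have zu: "z 1 \<noteq> u 1" using dj by auto
    show False
    proof (cases "k = 1")
      case True then show False using k zu by simp
    next
      case False
      have zin: "z 1 \<in> interval_pts (Ia 1) (Ib 1)" "u 1 \<in> interval_pts (Ia 1) (Ib 1)"
        using corners[OF one refl] corners_in[OF inn[OF one]] by auto
      have "1 \<noteq> k" using False by simp
      show False by (rule Z3[OF one k(1) \<open>1 \<noteq> k\<close> inn[OF one]]) (use zin k(2) in auto)
    qed
  qed
  have fnot: "?f \<notin> ?I"
  proof
    assume "?f \<in> ?I"
    moreover have "Poly_Mapping.lookup ?f M \<noteq> 0"
      unfolding fform lookup_minus using UM by (simp add: lookup_single)
    moreover have "Poly_Mapping.lookup p M = 0" if "p \<in> ?I" for p
    proof (rule coeff_zero[OF _ that])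
      fix a b m' assume ab: "inner_interval P a b"
      note ci = corners_in[OF ab]
      show "M \<noteq> m' + (Poly_Mapping.single a 1 + Poly_Mapping.single b 1) \<and>
        M \<noteq> m' + (Poly_Mapping.single (fst a, snd b) 1 + Poly_Mapping.single (fst b, snd a) 1)"
      proof (intro conjI notI)
        assume e: "M = m' + (Poly_Mapping.single a 1 + Poly_Mapping.single b 1)"
        show False by (rule noz[OF _ _ ab_ne(1)[OF ab] ab ci(1) ci(2)]) (use decomp_nz[OF e] in auto)
      next
        assume e: "M = m' + (Poly_Mapping.single (fst a, snd b) 1 + Poly_Mapping.single (fst b, snd a) 1)"
        show False by (rule noz[OF _ _ ab_ne(2)[OF ab] ab ci(3) ci(4)]) (use decomp_nz[OF e] in auto)
      qed
    qed
    ultimately show False by blast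
  qed
  have one: "1 \<in> {1..l}" using l1 by simp
  show ?thesis
  proof (intro conjI ballI)
    fix i assume i: "i \<in> {1..l}"
    show "zerodivisor_mod ?S ?I (var (v i))"
      unfolding zerodivisor_mod_def using fS fnot mem[OF i] by blast
  next
    show "zerodivisor_mod ?S ?I ?f"
    proof -
      have "?f * var (v 1) \<in> ?I" using mem[OF one] by (simp add: mult.commute)
      then show ?thesis unfolding zerodivisor_mod_def using varS(1)[OF one] vnot[of "v 1"] by blast
    qed
  next
    fix i assume i: "i \<in> {1..l}"
    show "var (v i) * ?f \<in> ?I" by (rule mem[OF i])
  qed
qed

end
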